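(* Let $\{(\mathbf{x}^{(i)},y^{(i)})\}_{i=1}^n$ with $\mathbf{x}^{(i)}\in\mathbb{R}^d$, $y^{(i)}\in\{-1,1\}$, $\|\mathbf{x}^{(i)}\|_2\le1$, and suppose there is $\mathbf{w}^*\in\mathbb{R}^d$ with $\|\mathbf{w}^*\|_2=1$ and $\min_{i\in[n]}y^{(i)}\mathbf{x}^{(i)\top}\mathbf{w}^*=\gamma>0$. Let $A\in\mathbb{R}^{n\times d}$ have $i$-th row $y^{(i)}\mathbf{x}^{(i)\top}$, let $\alpha_t=t$, $g(\mathbf{w},\mathbf{p})=\mathbf{p}^{\top}A\mathbf{w}-\tfrac12\|\mathbf{w}\|_2^2$, $\mathbf{p}_0=\tfrac{\mathbf{1}}{n}$, and for $j\ge0$ let $h_j(\mathbf{w})=-g(\mathbf{w},\mathbf{p}_j)$, $\ell_j(\mathbf{p})=g(\mathbf{w}_j,\mathbf{p})$. For $t=1,\dots,T$ define $\mathbf{w}_t=\arg\min_{\mathbf{w}\in\mathbb{R}^d}\sum_{j=1}^{t-1}\alpha_jh_j(\mathbf{w})+\alpha_th_{t-1}(\mathbf{w})$, and then $\mathbf{p}_t=\arg\min_{\mathbf{p}\in\Delta^n}\tfrac14\sum_{s=1}^{t}\alpha_s\ell_s(\mathbf{p})+D_E(\mathbf{p},\tfrac{\mathbf{1}}{n})$, and let $\overline{\mathbf{w}}_T=\frac{\sum_{t=1}^T\alpha_t\mathbf{w}_t}{\sum_{t=1}^T\alpha_t}$. Define the weighted regrets $R^{\mathbf{w}}=\sum_{t=1}^T\alpha_th_t(\mathbf{w}_t)-\min_{\mathbf{w}\in\mathbb{R}^d}\sum_{t=1}^T\alpha_th_t(\mathbf{w})$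 and $R^{\mathbf{p}}=\sum_{t=1}^T\alpha_t\ell_t(\mathbf{p}_t)-\min_{\mathbf{p}\in\Delta^n}\sum_{t=1}^T\alpha_t\ell_t(\mathbf{p})$. Then $R^{\mathbf{w}}\le 2\sum_{t=1}^T\|\mathbf{p}_t-\mathbf{p}_{t-1}\|_1^2$ and $R^{\mathbf{p}}\le 4\log n-2\sum_{t=1}^T\|\mathbf{p}_t-\mathbf{p}_{t-1}\|_1^2$. Moreover, there is a universal constant $C>0$ such that whenever $T\ge C\sqrt{\log n}/\gamma$, $\overline{\mathbf{w}}_T$ has non-negative margin, i.e. $\min_{i\in[n]}y^{(i)}\mathbf{x}^{(i)\top}\overline{\mathbf{w}}_T\ge0$.
   Context: $\Delta^n$ is the probability simplex in $\mathbb{R}^n$; $\mathbf{1}$ the all-ones vector; $D_E(\mathbf{p},\mathbf{q})=\sum_ip_i\log(p_i/q_i)$ is the Bregman divergence of the negative entropy $E(\mathbf{p})=\sum_ip_i\log p_i$ (the KL divergence). These dynamics are the game-theoretic form of the Smooth Perceptron of Soheili and Peña. *)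

theory Defs
  imports Complex_Main
begin

text \<open>Vectors in R^d are represented as functions nat => real; only the
coordinates k < d are relevant.  Data points are x i (i < n), labels y i.
Indices are 0-based: data index i ranges over {..<n}.\<close>

definition Rd :: "nat \<Rightarrow> (nat \<Rightarrow> real) set" where
  "Rd d = {w. \<forall>k\<ge>d. w k = 0}"

definition simplex :: "nat \<Rightarrow> (nat \<Rightarrow> real) set" where
  "simplex n = {p. (\<forall>i<n. 0 \<le> p i) \<and> (\<Sum>i<n. p i) = 1 \<and> (\<forall>i\<ge>n. p i = 0)}"

text \<open>KL divergence = Bregman divergence of negative entropy (0 log 0 = 0,
automatic since the summand is multiplied by p i).\<close>
definition KL :: "nat \<Rightarrow> (nat \<Rightarrow> real) \<Rightarrow> (nat \<Rightarrow> real) \<Rightarrow> real" where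
  "KL n p q = (\<Sum>i<n. p i * ln (p i / q i))"

definition unif :: "nat \<Rightarrow> nat \<Rightarrow> real" where
  "unif n = (\<lambda>i. if i < n then 1 / real n else 0)"

definition Amul :: "nat \<Rightarrow> (nat \<Rightarrow> nat \<Rightarrow> real) \<Rightarrow> (nat \<Rightarrow> real) \<Rightarrow> (nat \<Rightarrow> real) \<Rightarrow> nat \<Rightarrow> real" where
  "Amul d x y w i = y i * (\<Sum>k<d. x i k * w k)"

definition gfun :: "nat \<Rightarrow> nat \<Rightarrow> (nat \<Rightarrow> nat \<Rightarrow> real) \<Rightarrow> (nat \<Rightarrow> real)
                    \<Rightarrow> (nat \<Rightarrow> real) \<Rightarrow> (nat \<Rightarrow> real) \<Rightarrow> real" where
  "gfun n d x y w p = (\<Sum>i<n. p i * Amul d x y w i) - 1/2 * (\<Sum>k<d. (w k)^2)"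

definition alpha :: "nat \<Rightarrow> real" where
  "alpha t = real t"

definition w_step :: "nat \<Rightarrow> nat \<Rightarrow> (nat \<Rightarrow> nat \<Rightarrow> real) \<Rightarrow> (nat \<Rightarrow> real)
                      \<Rightarrow> (nat \<Rightarrow> nat \<Rightarrow> real) \<Rightarrow> nat \<Rightarrow> (nat \<Rightarrow> real)" where
  "w_step n d x y P t = arg_min
     (\<lambda>w. (\<Sum>j\<in>{1..<t}. alpha j * (- gfun n d x y w (P j))) + alpha t * (- gfun n d x y w (P (t - 1))))
     (\<lambda>w. w \<in> Rd d)"

definition p_step :: "nat \<Rightarrow> nat \<Rightarrow> (nat \<Rightarrow> nat \<Rightarrow> real) \<Rightarrow> (nat \<Rightarrow> real)
                      \<Rightarrow> (nat \<Rightarrow> nat \<Rightarrow> real) \<Rightarrow> nat \<Rightarrow> (nat \<Rightarrow> real)" where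
  "p_step n d x y W t = arg_min
     (\<lambda>p. 1/4 * (\<Sum>s\<in>{1..t}. alpha s * gfun n d x y (W s) p) + KL n p (unif n))
     (\<lambda>p. p \<in> simplex n)"

text \<open>History of the dynamics after t rounds: (W, P) with W j = w_j (1 \<le> j \<le> t)
  and P j = p_j (0 \<le> j \<le> t).\<close>
fun hist :: "nat \<Rightarrow> nat \<Rightarrow> (nat \<Rightarrow> nat \<Rightarrow> real) \<Rightarrow> (nat \<Rightarrow> real) \<Rightarrow> nat
              \<Rightarrow> (nat \<Rightarrow> nat \<Rightarrow> real) \<times> (nat \<Rightarrow> nat \<Rightarrow> real)" where
  "hist n d x y 0 = ((\<lambda>j k. 0), (\<lambda>j. unif n))"
| "hist n d x y (Suc t) =
     (let (W, P) = hist n d x y t;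
          W' = W(Suc t := w_step n d x y P (Suc t));
          P' = P(Suc t := p_step n d x y W' (Suc t))
      in (W', P'))"

definition wseq :: "nat \<Rightarrow> nat \<Rightarrow> (nat \<Rightarrow> nat \<Rightarrow> real) \<Rightarrow> (nat \<Rightarrow> real) \<Rightarrow> nat \<Rightarrow> (nat \<Rightarrow> real)" where
  "wseq n d x y t = fst (hist n d x y t) t"

definition pseq :: "nat \<Rightarrow> nat \<Rightarrow> (nat \<Rightarrow> nat \<Rightarrow> real) \<Rightarrow> (nat \<Rightarrow> real) \<Rightarrow> nat \<Rightarrow> (nat \<Rightarrow> real)" where
  "pseq n d x y t = snd (hist n d x y t) t"

definition wbar :: "nat \<Rightarrow> nat \<Rightarrow> (nat \<Rightarrow> nat \<Rightarrow> real) \<Rightarrow> (nat \<Rightarrow> real) \<Rightarrow> nat \<Rightarrow> (nat \<Rightarrow> real)" where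
  "wbar n d x y T = (\<lambda>k. (\<Sum>t\<in>{1..T}. alpha t * wseq n d x y t k) / (\<Sum>t\<in>{1..T}. alpha t))"

definition regret_w :: "nat \<Rightarrow> nat \<Rightarrow> (nat \<Rightarrow> nat \<Rightarrow> real) \<Rightarrow> (nat \<Rightarrow> real) \<Rightarrow> nat \<Rightarrow> real" where
  "regret_w n d x y T =
     (\<Sum>t\<in>{1..T}. alpha t * (- gfun n d x y (wseq n d x y t) (pseq n d x y t)))
     - (INF w\<in>Rd d. \<Sum>t\<in>{1..T}. alpha t * (- gfun n d x y w (pseq n d x y t)))"

definition regret_p :: "nat \<Rightarrow> nat \<Rightarrow> (nat \<Rightarrow> nat \<Rightarrow> real) \<Rightarrow> (nat \<Rightarrow> real) \<Rightarrow> nat \<Rightarrow> real" where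
  "regret_p n d x y T =
     (\<Sum>t\<in>{1..T}. alpha t * gfun n d x y (wseq n d x y t) (pseq n d x y t))
     - (INF p\<in>simplex n. \<Sum>t\<in>{1..T}. alpha t * gfun n d x y (wseq n d x y t) p)"

definition path_len :: "nat \<Rightarrow> nat \<Rightarrow> (nat \<Rightarrow> nat \<Rightarrow> real) \<Rightarrow> (nat \<Rightarrow> real) \<Rightarrow> nat \<Rightarrow> real" where
  "path_len n d x y T =
     (\<Sum>t\<in>{1..T}. (\<Sum>i<n. \<bar>pseq n d x y t i - pseq n d x y (t - 1) i\<bar>)^2)"

end

theory Submission
  imports Defs "HOL-Analysis.Convex"
begin


lemma wcs:
  fixes a w :: "nat \<Rightarrow> real"
  assumes "\<And>i. i \<in> A \<Longrightarrow> w i \<ge> 0" and "\<And>i. i \<in> A \<Longrightarrow> w i = 0 \<Longrightarrow> a i = 0"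
  shows "(\<Sum>i\<in>A. a i)\<^sup>2 \<le> (\<Sum>i\<in>A. w i) * (\<Sum>i\<in>A. (a i)\<^sup>2 / w i)"
proof -
  have e1: "(\<Sum>i\<in>A. a i) = (\<Sum>i\<in>A. (a i / sqrt (w i)) * sqrt (w i))"
    by (rule sum.cong) (use assms in auto)
  have e2: "(\<Sum>i\<in>A. w i) = (\<Sum>i\<in>A. (sqrt (w i))\<^sup>2)"
    by (rule sum.cong) (use assms in auto)
  have e3: "(\<Sum>i\<in>A. (a i)\<^sup>2 / w i) = (\<Sum>i\<in>A. (a i / sqrt (w i))\<^sup>2)"
    by (rule sum.cong) (use assms in \<open>auto simp: power_divide\<close>)
  show ?thesis unfolding e1 e2 e3
    using Cauchy_Schwarz_ineq_sum[of "\<lambda>i. a i / sqrt (w i)" "\<lambda>i. sqrt (w i)" A]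
    by (simp add: mult.commute)
qed

lemma scalar_ineq:
  fixes x :: real assumes "x \<ge> 0"
  shows "3/2 * (x - 1)\<^sup>2 / (x + 2) \<le> x * ln x - x + 1"
proof -
  define f where "f = (\<lambda>x::real. (x * ln x - x + 1) * (2*x+4) - 3 * (x - 1)\<^sup>2)"
  define g where "g = (\<lambda>x::real. (4*x+4) * ln x - 8*x + 8)"
  have df: "DERIV f z :> g z" if "z > 0" for z
    unfolding f_def g_def using that by (auto intro!: derivative_eq_intros simp: field_simps power2_eq_square)
  have dg: "DERIV g z :> 4 * (ln z + 1/z - 1)" if "z > 0" for z
    unfolding g_def using that by (auto intro!: derivative_eq_intros simp: field_simps)
  have lnb: "ln z + 1/z - 1 \<ge> 0" if "z > 0" for z :: real
  proof -
    have "ln (1/z) \<le> 1/z - 1" by (rule ln_le_minus_one) (use that in simp)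
    then show ?thesis using that by (simp add: ln_div)
  qed
  have g1: "g 1 = 0" by (simp add: g_def)
  have gle: "g z \<le> 0" if "0 < z" "z \<le> 1" for z
    using DERIV_nonneg_imp_nondecreasing[of z 1 g] dg lnb that g1
    by (metis less_le_trans mult_nonneg_nonneg zero_le_numeral)
  have gge: "g z \<ge> 0" if "1 \<le> z" for z
    using DERIV_nonneg_imp_nondecreasing[of 1 z g] dg lnb that g1
    by (metis less_le_trans zero_less_one mult_nonneg_nonneg zero_le_numeral)
  have f1: "f 1 = 0" by (simp add: f_def)
  have fnn: "f x \<ge> 0"
  proof (cases "x = 0")
    case True then show ?thesis by (simp add: f_def)
  next
    case False
    then have xp: "x > 0" using assms by auto
    show ?thesis
    proof (cases "x \<le> 1")
      case True
      then show ?thesis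
        using DERIV_nonpos_imp_nonincreasing[of x 1 f] df gle xp f1
        by (metis less_le_trans)
    next
      case False
      then show ?thesis
        using DERIV_nonneg_imp_nondecreasing[of 1 x f] df gge f1
        by (metis less_le_trans zero_less_one linorder_not_le order_less_imp_le)
    qed
  qed
  then have "3 * (x - 1)\<^sup>2 \<le> (x * ln x - x + 1) * (2*x+4)" by (simp add: f_def)
  then show ?thesis using assms by (simp add: field_simps)
qed



lemma aux: fixes a b :: real assumes "b > 0" "a + 2*b > 0"
  shows "b * (3/2 * (a / b - 1)\<^sup>2 / (a / b + 2)) = 3/2 * (a - b)\<^sup>2 / (a + 2 * b)"
proof -
  have e1: "a / b - 1 = (a - b) / b" and e2: "a / b + 2 = (a + 2 * b) / b"
    using assms by (simp_all add: field_simps)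
  have n: "a + 2 * b \<noteq> 0" "b \<noteq> 0" using assms by auto
  have "(a / b - 1)\<^sup>2 / (a / b + 2) = (a - b)\<^sup>2 / (b * (a + 2 * b))"
    unfolding e1 e2 using assms by (simp add: power_divide power2_eq_square)
  moreover have "b * (3/2 * (a / b - 1)\<^sup>2 / (a / b + 2)) = 3/2 * b * ((a / b - 1)\<^sup>2 / (a / b + 2))"
    by simp
  ultimately show ?thesis using n by simp
qed

lemma pinsker:
  assumes p: "p \<in> simplex n" and q: "q \<in> simplex n" and qpos: "\<forall>i<n. q i > 0"
  shows "KL n p q \<ge> 1/2 * (\<Sum>i<n. \<bar>p i - q i\<bar>)\<^sup>2"
proof -
  have pn: "\<And>i. i < n \<Longrightarrow> p i \<ge> 0" and ps: "(\<Sum>i<n. p i) = 1" using p by (auto simp: simplex_def)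
  have qs: "(\<Sum>i<n. q i) = 1" using q by (auto simp: simplex_def)
  have hterm: "3/2 * (p i - q i)\<^sup>2 / (p i + 2 * q i) \<le> p i * ln (p i / q i) - p i + q i"
    if i: "i < n" for i
  proof -
    have qi: "q i > 0" using qpos i by auto
    have pi: "p i \<ge> 0" using pn i by auto
    have "3/2 * (p i / q i - 1)\<^sup>2 / (p i / q i + 2) \<le> p i / q i * ln (p i / q i) - p i / q i + 1"
      using scalar_ineq[of "p i / q i"] qi pi by auto
    then have "q i * (3/2 * (p i / q i - 1)\<^sup>2 / (p i / q i + 2)) \<le> q i * (p i / q i * ln (p i / q i) - p i / q i + 1)"
      using qi by (intro mult_left_mono) auto
    moreover have "q i * (3/2 * (p i / q i - 1)\<^sup>2 / (p i / q i + 2)) = 3/2 * (p i - q i)\<^sup>2 / (p i + 2 * q i)"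
      using aux[of "q i" "p i"] qi pi by simp
    moreover have "q i * (p i / q i * ln (p i / q i) - p i / q i + 1) = p i * ln (p i / q i) - p i + q i"
      using qi by (simp add: field_simps)
    ultimately show ?thesis by simp
  qed
  have "(\<Sum>i<n. 3/2 * (p i - q i)\<^sup>2 / (p i + 2 * q i)) \<le> (\<Sum>i<n. p i * ln (p i / q i) - p i + q i)"
    by (rule sum_mono) (use hterm in auto)
  also have "\<dots> = KL n p q" using ps qs by (simp add: KL_def sum.distrib sum_subtractf)
  finally have h1: "(\<Sum>i<n. 3/2 * (p i - q i)\<^sup>2 / (p i + 2 * q i)) \<le> KL n p q" .
  have "(\<Sum>i<n. \<bar>p i - q i\<bar>)\<^sup>2 \<le> (\<Sum>i<n. p i + 2 * q i) * (\<Sum>i<n. \<bar>p i - q i\<bar>\<^sup>2 / (p i + 2 * q i))"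
  proof (rule wcs)
    fix i assume i: "i \<in> {..<n}"
    then have "p i \<ge> 0" "q i > 0" using pn qpos by auto
    then show "p i + 2 * q i \<ge> 0" and "p i + 2 * q i = 0 \<Longrightarrow> \<bar>p i - q i\<bar> = 0" by auto
  qed
  also have "(\<Sum>i<n. p i + 2 * q i) = 3" using ps qs by (simp add: sum.distrib sum_distrib_left[symmetric])
  also have "(\<Sum>i<n. \<bar>p i - q i\<bar>\<^sup>2 / (p i + 2 * q i)) = (\<Sum>i<n. (p i - q i)\<^sup>2 / (p i + 2 * q i))"
    by simp
  finally have h2: "(\<Sum>i<n. \<bar>p i - q i\<bar>)\<^sup>2 \<le> 3 * (\<Sum>i<n. (p i - q i)\<^sup>2 / (p i + 2 * q i))" .
  have h3: "(\<Sum>i<n. 3/2 * (p i - q i)\<^sup>2 / (p i + 2 * q i)) = 3/2 * (\<Sum>i<n. (p i - q i)\<^sup>2 / (p i + 2 * q i))"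
    by (simp add: sum_distrib_left)
  show ?thesis using h1 h2 h3 by linarith
qed


definition gibbs :: "nat \<Rightarrow> (nat \<Rightarrow> real) \<Rightarrow> nat \<Rightarrow> real" where
  "gibbs n L = (\<lambda>i. if i < n then exp (- L i) / (\<Sum>j<n. exp (- L j)) else 0)"

lemma Zpos: "(n::nat) \<ge> 1 \<Longrightarrow> (\<Sum>j<n. exp (- L j)) > (0::real)"
proof -
  assume "(n::nat) \<ge> 1"
  then have "0 \<in> {..<n}" by auto
  then show ?thesis by (intro sum_pos) auto
qed

lemma gibbs_simplex: "n \<ge> 1 \<Longrightarrow> gibbs n L \<in> simplex n"
  using Zpos[of n L]
  by (auto simp: simplex_def gibbs_def sum_divide_distrib[symmetric])

lemma gibbs_pos: "n \<ge> 1 \<Longrightarrow> i < n \<Longrightarrow> gibbs n L i > 0"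
  using Zpos[of n L] by (auto simp: gibbs_def)

lemma KL_self: "KL n q q = 0"
  unfolding KL_def by (rule sum.neutral) auto

lemma KL_nonneg: "p \<in> simplex n \<Longrightarrow> q \<in> simplex n \<Longrightarrow> \<forall>i<n. q i > 0 \<Longrightarrow> KL n p q \<ge> 0"
proof -
  assume a: "p \<in> simplex n" "q \<in> simplex n" "\<forall>i<n. q i > 0"
  have "0 \<le> 1/2 * (\<Sum>i<n. \<bar>p i - q i\<bar>)\<^sup>2" by simp
  also have "\<dots> \<le> KL n p q" using pinsker[OF a] .
  finally show ?thesis .
qed

lemma KL_zero_eq:
  assumes "p \<in> simplex n" "q \<in> simplex n" "\<forall>i<n. q i > 0" "KL n p q \<le> 0"
  shows "p = q"
proof
  fix i
  have "1/2 * (\<Sum>i<n. \<bar>p i - q i\<bar>)\<^sup>2 \<le> 0" using pinsker[OF assms(1-3)] assms(4) by linarith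
  then have "(\<Sum>i<n. \<bar>p i - q i\<bar>)\<^sup>2 \<le> 0" by simp
  then have "(\<Sum>i<n. \<bar>p i - q i\<bar>) = 0" by simp
  then have "\<forall>i\<in>{..<n}. \<bar>p i - q i\<bar> = 0" by (subst sum_nonneg_eq_0_iff[symmetric]) auto
  then show "p i = q i" using assms(1,2) by (cases "i < n") (auto simp: simplex_def)
qed

lemma gibbs_eq:
  assumes n: "n \<ge> 1" and p: "p \<in> simplex n"
  shows "(\<Sum>i<n. p i * L i) + KL n p (unif n)
       = KL n p (gibbs n L) - ln (\<Sum>j<n. exp (- L j)) + ln (real n)"
proof -
  define Z where "Z = (\<Sum>j<n. exp (- L j))"
  have Z: "Z > 0" using Zpos[OF n] by (simp add: Z_def)
  have ps: "(\<Sum>i<n. p i) = 1" and pn: "\<And>i. i<n \<Longrightarrow> p i \<ge> 0" using p by (auto simp: simplex_def)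
  have "p i * L i + p i * ln (p i / unif n i) = p i * ln (p i / gibbs n L i) - p i * ln Z + p i * ln (real n)"
    if i: "i < n" for i
  proof (cases "p i = 0")
    case False
    then have pp: "p i > 0" using pn i by (simp add: less_le)
    have "ln (p i / unif n i) = ln (p i) + ln (real n)" using i n pp by (simp add: unif_def ln_div ln_mult)
    moreover have "ln (p i / gibbs n L i) = ln (p i) + L i + ln Z"
      using i pp Z by (simp add: gibbs_def Z_def[symmetric] ln_div ln_mult)
    ultimately show ?thesis by (simp add: algebra_simps)
  qed simp
  then have "(\<Sum>i<n. p i * L i + p i * ln (p i / unif n i)) = (\<Sum>i<n. p i * ln (p i / gibbs n L i) - p i * ln Z + p i * ln (real n))"
    by (intro sum.cong) auto
  then show ?thesis
    by (simp add: KL_def Z_def[symmetric] sum.distrib sum_subtractf sum_distrib_right[symmetric] ps)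
qed

lemma KL_unif_le: assumes n: "n \<ge> 1" and p: "p \<in> simplex n" shows "KL n p (unif n) \<le> ln (real n)"
proof -
  have ps: "(\<Sum>i<n. p i) = 1" and pn: "\<And>i. i<n \<Longrightarrow> p i \<ge> 0" using p by (auto simp: simplex_def)
  have ple: "p i \<le> 1" if "i < n" for i
  proof -
    have "p i \<le> (\<Sum>j<n. p j)" using that pn by (intro member_le_sum) auto
    then show ?thesis using ps by simp
  qed
  have "p i * ln (p i / unif n i) \<le> p i * ln (real n)" if i: "i < n" for i
  proof (cases "p i = 0")
    case False
    then have pp: "p i > 0" using pn i by (simp add: less_le)
    have "ln (p i / unif n i) = ln (p i) + ln (real n)" using i n pp by (simp add: unif_def ln_div ln_mult)
    moreover have "ln (p i) \<le> 0" using ple[OF i] pp by simp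
    ultimately show ?thesis using pp by (simp add: mult_left_mono)
  qed simp
  then have "KL n p (unif n) \<le> (\<Sum>i<n. p i * ln (real n))" unfolding KL_def by (intro sum_mono) auto
  also have "\<dots> = ln (real n)" by (simp add: sum_distrib_right[symmetric] ps)
  finally show ?thesis .
qed

lemma arg_min_unique:
  assumes "is_arg_min f P x" "\<And>z. is_arg_min f P z \<Longrightarrow> z = x"
  shows "arg_min f P = x"
  unfolding arg_min_def using assms by (metis someI)



context
  fixes n d :: nat and x :: "nat \<Rightarrow> nat \<Rightarrow> real" and y :: "nat \<Rightarrow> real"
begin

lemma hist_PW:
  "(\<forall>j\<le>t. snd (hist n d x y t) j = pseq n d x y j) \<and>
   (\<forall>j. 1 \<le> j \<and> j \<le> t \<longrightarrow> fst (hist n d x y t) j = wseq n d x y j)"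
proof (induction t)
  case 0
  then show ?case by (simp add: pseq_def)
next
  case (Suc t)
  obtain W P where h: "hist n d x y t = (W, P)" by (cases "hist n d x y t")
  have hs: "hist n d x y (Suc t) = (W(Suc t := w_step n d x y P (Suc t)),
      P(Suc t := p_step n d x y (W(Suc t := w_step n d x y P (Suc t))) (Suc t)))"
    by (simp add: h Let_def)
  show ?case
  proof (intro conjI allI impI)
    fix j assume j: "j \<le> Suc t"
    show "snd (hist n d x y (Suc t)) j = pseq n d x y j"
    proof (cases "j = Suc t")
      case True then show ?thesis by (simp add: pseq_def)
    next
      case False
      then have "j \<le> t" using j by auto
      then show ?thesis using Suc.IH False unfolding hs by (simp add: h)
    qed
  next
    fix j assume j: "1 \<le> j \<and> j \<le> Suc t"
    show "fst (hist n d x y (Suc t)) j = wseq n d x y j"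
    proof (cases "j = Suc t")
      case True then show ?thesis by (simp add: wseq_def)
    next
      case False
      then have "1 \<le> j" "j \<le> t" using j by auto
      then show ?thesis using Suc.IH False unfolding hs by (simp add: h)
    qed
  qed
qed

lemma pseq0: "pseq n d x y 0 = unif n" by (simp add: pseq_def)

lemma wseq_step: assumes "t \<ge> 1" shows "wseq n d x y t = w_step n d x y (pseq n d x y) t"
proof -
  obtain t' where t: "t = Suc t'" using assms by (cases t) auto
  obtain W P where h: "hist n d x y t' = (W, P)" by (cases "hist n d x y t'")
  have "wseq n d x y t = w_step n d x y P t"
    by (simp add: wseq_def t h Let_def)
  also have "\<dots> = w_step n d x y (pseq n d x y) t"
  proof -
    have PP: "P j = pseq n d x y j" if "j \<le> t'" for j
      using hist_PW[of t'] that h by auto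
    show ?thesis unfolding w_step_def t
      by (intro arg_cong2[where f=arg_min] ext refl arg_cong2[where f="(+)"] sum.cong)
         (auto simp: PP)
  qed
  finally show ?thesis .
qed

lemma pseq_step: assumes "t \<ge> 1" shows "pseq n d x y t = p_step n d x y (wseq n d x y) t"
proof -
  obtain t' where t: "t = Suc t'" using assms by (cases t) auto
  have "pseq n d x y t = p_step n d x y (fst (hist n d x y t)) t"
    by (simp add: pseq_def t Let_def split: prod.splits)
  also have "\<dots> = p_step n d x y (wseq n d x y) t"
  proof -
    have WW: "fst (hist n d x y t) s = wseq n d x y s" if "1 \<le> s" "s \<le> t" for s
      using hist_PW[of t] that by auto
    show ?thesis unfolding p_step_def
      by (intro arg_cong2[where f=arg_min] ext refl arg_cong2[where f="(+)"] arg_cong2[where f="(*)"] sum.cong)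
         (auto simp: WW)
  qed
  finally show ?thesis .
qed

end


definition th :: "nat \<Rightarrow> (nat \<Rightarrow> nat \<Rightarrow> real) \<Rightarrow> (nat \<Rightarrow> real) \<Rightarrow> (nat \<Rightarrow> real) \<Rightarrow> nat \<Rightarrow> real" where
  "th n x y p k = (\<Sum>i<n. p i * y i * x i k)"

definition Qf :: "nat \<Rightarrow> real \<Rightarrow> (nat \<Rightarrow> real) \<Rightarrow> (nat \<Rightarrow> real) \<Rightarrow> real" where
  "Qf d S v w = S / 2 * (\<Sum>k<d. (w k)\<^sup>2) - (\<Sum>k<d. v k * w k)"

definition cen :: "nat \<Rightarrow> real \<Rightarrow> (nat \<Rightarrow> real) \<Rightarrow> nat \<Rightarrow> real" where
  "cen d S v = (\<lambda>k. if k < d then v k / S else 0)"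

lemma neg_g: "- gfun n d x y w p = Qf d 1 (th n x y p) w"
proof -
  have "(\<Sum>i<n. p i * Amul d x y w i) = (\<Sum>k<d. th n x y p k * w k)"
    unfolding Amul_def th_def
    by (simp add: sum_distrib_left sum_distrib_right mult_ac sum.swap[of _ "{..<d}"])
  then show ?thesis by (simp add: gfun_def Qf_def)
qed

lemma Q_add: "Qf d S v w + Qf d S' v' w = Qf d (S + S') (\<lambda>k. v k + v' k) w"
  by (simp add: Qf_def algebra_simps sum.distrib)

lemma Q_scale: "c * Qf d S v w = Qf d (c * S) (\<lambda>k. c * v k) w"
  by (simp add: Qf_def algebra_simps sum_distrib_left)

lemma Q_zero: "Qf d 0 (\<lambda>k. 0) w = 0"
  by (simp add: Qf_def)

lemma Q_diff: assumes S: "S > 0"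
  shows "Qf d S v w = Qf d S v (cen d S v) + S / 2 * (\<Sum>k<d. (w k - v k / S)\<^sup>2)"
proof -
  have "S / 2 * (w k)\<^sup>2 - v k * w k = (S / 2 * (v k / S)\<^sup>2 - v k * (v k / S)) + S / 2 * (w k - v k / S)\<^sup>2" for k
    using S by (simp add: field_simps power2_eq_square)
  then have "(\<Sum>k<d. S / 2 * (w k)\<^sup>2 - v k * w k) = (\<Sum>k<d. (S / 2 * (cen d S v k)\<^sup>2 - v k * cen d S v k) + S / 2 * (w k - v k / S)\<^sup>2)"
    by (intro sum.cong) (auto simp: cen_def)
  then show ?thesis
    by (simp add: Qf_def sum.distrib sum_subtractf sum_distrib_left)
qed

lemma Q_ge: "S > 0 \<Longrightarrow> Qf d S v w \<ge> Qf d S v (cen d S v)"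
  using Q_diff[of S d v w] by (simp add: sum_nonneg)

lemma Q_argmin: assumes S: "S > 0"
  shows "arg_min (Qf d S v) (\<lambda>w. w \<in> Rd d) = cen d S v"
proof (rule arg_min_unique)
  show "is_arg_min (Qf d S v) (\<lambda>w. w \<in> Rd d) (cen d S v)"
    using Q_ge[OF S] by (auto simp: is_arg_min_def Rd_def cen_def not_less)
next
  fix z assume z: "is_arg_min (Qf d S v) (\<lambda>w. w \<in> Rd d) z"
  have cR: "cen d S v \<in> Rd d" by (auto simp: Rd_def cen_def)
  from z have zR: "z \<in> Rd d" and "\<not> (cen d S v \<in> Rd d \<and> Qf d S v (cen d S v) < Qf d S v z)"
    unfolding is_arg_min_def by blast+
  then have "\<not> Qf d S v (cen d S v) < Qf d S v z" using cR by blast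
  then have "Qf d S v z \<le> Qf d S v (cen d S v)" by simp
  then have "S / 2 * (\<Sum>k<d. (z k - v k / S)\<^sup>2) \<le> 0" using Q_diff[OF S, of d v z] by simp
  then have "(\<Sum>k<d. (z k - v k / S)\<^sup>2) \<le> 0" using S by (simp add: mult_le_0_iff)
  then have "(\<Sum>k<d. (z k - v k / S)\<^sup>2) = 0" by (meson order_antisym sum_nonneg zero_le_power2)
  then have "\<forall>k\<in>{..<d}. (z k - v k / S)\<^sup>2 = 0" by (subst sum_nonneg_eq_0_iff[symmetric]) auto
  then show "z = cen d S v" using zR by (auto simp: cen_def Rd_def fun_eq_iff)
qed

definition Sa :: "nat \<Rightarrow> real" where "Sa t = (\<Sum>s\<in>{1..t}. alpha s)"

lemma Sa_Suc: "Sa (Suc t) = Sa t + alpha (Suc t)"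
  by (simp add: Sa_def)

lemma Sa_formula: "Sa t = real t * (real t + 1) / 2"
  by (induction t) (auto simp: Sa_Suc alpha_def field_simps, simp add: Sa_def)

lemma Sa_pos: "t \<ge> 1 \<Longrightarrow> Sa t > 0"
  by (simp add: Sa_formula)

lemma thdiff_bound:
  fixes c y :: "nat \<Rightarrow> real" and x :: "nat \<Rightarrow> nat \<Rightarrow> real" and n d :: nat
  assumes y: "\<forall>i<n. y i \<in> {-1, 1}" and xb: "\<forall>i<n. sqrt (\<Sum>k<d. (x i k)\<^sup>2) \<le> 1"
  shows "(\<Sum>k<d. (\<Sum>i<n. c i * y i * x i k)\<^sup>2) \<le> (\<Sum>i<n. \<bar>c i\<bar>)\<^sup>2"
proof -
  have y2: "(y i)\<^sup>2 = 1" if "i < n" for i using y that by auto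
  have xs: "(\<Sum>k<d. (x i k)\<^sup>2) \<le> 1" if "i < n" for i
    using xb that by (simp add: real_sqrt_le_1_iff)
  have pk: "(\<Sum>i<n. c i * y i * x i k)\<^sup>2 \<le> (\<Sum>i<n. \<bar>c i\<bar>) * (\<Sum>i<n. \<bar>c i\<bar> * (x i k)\<^sup>2)" for k
  proof -
    have "(\<Sum>i<n. c i * y i * x i k)\<^sup>2 \<le> (\<Sum>i<n. \<bar>c i\<bar>) * (\<Sum>i<n. (c i * y i * x i k)\<^sup>2 / \<bar>c i\<bar>)"
      by (rule wcs[where A="{..<n}" and w="\<lambda>i. \<bar>c i\<bar>" and a="\<lambda>i. c i * y i * x i k"]) auto
    also have "(\<Sum>i<n. (c i * y i * x i k)\<^sup>2 / \<bar>c i\<bar>) = (\<Sum>i<n. \<bar>c i\<bar> * (x i k)\<^sup>2)"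
    proof (intro sum.cong refl)
      fix i assume "i \<in> {..<n}"
      then have "(y i)\<^sup>2 = 1" using y2 by auto
      then show "(c i * y i * x i k)\<^sup>2 / \<bar>c i\<bar> = \<bar>c i\<bar> * (x i k)\<^sup>2"
        by (cases "c i = 0") (auto simp: power_mult_distrib power2_eq_square field_simps abs_mult_self_eq)
    qed
    finally show ?thesis .
  qed
  have "(\<Sum>k<d. (\<Sum>i<n. c i * y i * x i k)\<^sup>2) \<le> (\<Sum>k<d. (\<Sum>i<n. \<bar>c i\<bar>) * (\<Sum>i<n. \<bar>c i\<bar> * (x i k)\<^sup>2))"
    by (intro sum_mono pk)
  also have "\<dots> = (\<Sum>i<n. \<bar>c i\<bar>) * (\<Sum>i<n. \<bar>c i\<bar> * (\<Sum>k<d. (x i k)\<^sup>2))"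
  proof -
    have "(\<Sum>k<d. (\<Sum>i<n. \<bar>c i\<bar>) * (\<Sum>i<n. \<bar>c i\<bar> * (x i k)\<^sup>2)) = (\<Sum>i<n. \<bar>c i\<bar>) * (\<Sum>k<d. \<Sum>i<n. \<bar>c i\<bar> * (x i k)\<^sup>2)"
      by (rule sum_distrib_left[symmetric])
    also have "(\<Sum>k<d. \<Sum>i<n. \<bar>c i\<bar> * (x i k)\<^sup>2) = (\<Sum>i<n. \<bar>c i\<bar> * (\<Sum>k<d. (x i k)\<^sup>2))"
      by (subst sum.swap) (simp add: sum_distrib_left)
    finally show ?thesis .
  qed
  also have "\<dots> \<le> (\<Sum>i<n. \<bar>c i\<bar>) * (\<Sum>i<n. \<bar>c i\<bar> * 1)"
    by (intro mult_left_mono sum_mono) (auto intro: mult_left_mono xs simp: sum_nonneg)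
  finally show ?thesis by (simp add: power2_eq_square)
qed



definition Th :: "nat \<Rightarrow> nat \<Rightarrow> (nat \<Rightarrow> nat \<Rightarrow> real) \<Rightarrow> (nat \<Rightarrow> real) \<Rightarrow> nat \<Rightarrow> nat \<Rightarrow> real" where
  "Th n d x y t k = (\<Sum>s\<in>{1..t}. alpha s * th n x y (pseq n d x y s) k)"

definition Fw :: "nat \<Rightarrow> nat \<Rightarrow> (nat \<Rightarrow> nat \<Rightarrow> real) \<Rightarrow> (nat \<Rightarrow> real) \<Rightarrow> nat \<Rightarrow> (nat \<Rightarrow> real) \<Rightarrow> real" where
  "Fw n d x y t w = (\<Sum>s\<in>{1..t}. alpha s * (- gfun n d x y w (pseq n d x y s)))"

definition mm :: "nat \<Rightarrow> nat \<Rightarrow> (nat \<Rightarrow> nat \<Rightarrow> real) \<Rightarrow> (nat \<Rightarrow> real) \<Rightarrow> nat \<Rightarrow> real" where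
  "mm n d x y t = (if t = 0 then 0 else Qf d (Sa t) (Th n d x y t) (cen d (Sa t) (Th n d x y t)))"

lemma Fw_Suc: "Fw n d x y (Suc t) w = Fw n d x y t w + alpha (Suc t) * (- gfun n d x y w (pseq n d x y (Suc t)))"
  by (simp add: Fw_def)

lemma Th_Suc: "Th n d x y (Suc t) = (\<lambda>k. Th n d x y t k + alpha (Suc t) * th n x y (pseq n d x y (Suc t)) k)"
  by (simp add: Th_def fun_eq_iff)

lemma Fw_Q: "Fw n d x y t w = Qf d (Sa t) (Th n d x y t) w"
proof (induction t)
  case 0
  then show ?case by (simp add: Fw_def Th_def Sa_def Qf_def)
next
  case (Suc t)
  have "Fw n d x y (Suc t) w = Qf d (Sa t) (Th n d x y t) w + alpha (Suc t) * Qf d 1 (th n x y (pseq n d x y (Suc t))) w"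
    by (simp add: Fw_Suc Suc.IH neg_g)
  also have "\<dots> = Qf d (Sa (Suc t)) (Th n d x y (Suc t)) w"
    by (simp add: Q_scale Q_add Sa_Suc Th_Suc)
  finally show ?case .
qed

lemma Fw_ge: "Fw n d x y t w \<ge> mm n d x y t"
proof (cases "t = 0")
  case True then show ?thesis by (simp add: Fw_def mm_def)
next
  case False
  then have "Sa t > 0" using Sa_pos by simp
  then show ?thesis using False Q_ge by (simp add: Fw_Q mm_def)
qed

lemma wseq_closed:
  assumes "t \<ge> 1"
  shows "wseq n d x y t = cen d (Sa t) (\<lambda>k. Th n d x y (t - 1) k + alpha t * th n x y (pseq n d x y (t - 1)) k)"
proof -
  obtain t' where t: "t = Suc t'" using assms by (cases t) auto
  have obj: "(\<lambda>w. (\<Sum>j\<in>{1..<t}. alpha j * (- gfun n d x y w (pseq n d x y j))) + alpha t * (- gfun n d x y w (pseq n d x y (t - 1))))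
     = Qf d (Sa t) (\<lambda>k. Th n d x y (t - 1) k + alpha t * th n x y (pseq n d x y (t - 1)) k)"
  proof
    fix w
    have "(\<Sum>j\<in>{1..<t}. alpha j * (- gfun n d x y w (pseq n d x y j))) = Fw n d x y t' w"
      by (simp add: Fw_def t atLeastLessThanSuc_atLeastAtMost)
    then show "(\<Sum>j\<in>{1..<t}. alpha j * (- gfun n d x y w (pseq n d x y j))) + alpha t * (- gfun n d x y w (pseq n d x y (t - 1)))
     = Qf d (Sa t) (\<lambda>k. Th n d x y (t - 1) k + alpha t * th n x y (pseq n d x y (t - 1)) k) w"
      by (simp add: Fw_Q neg_g Q_scale Q_add t Sa_Suc)
  qed
  have "wseq n d x y t = w_step n d x y (pseq n d x y) t" using wseq_step assms by blast
  also have "\<dots> = arg_min (Qf d (Sa t) (\<lambda>k. Th n d x y (t - 1) k + alpha t * th n x y (pseq n d x y (t - 1)) k)) (\<lambda>w. w \<in> Rd d)"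
    unfolding w_step_def obj ..
  also have "\<dots> = cen d (Sa t) (\<lambda>k. Th n d x y (t - 1) k + alpha t * th n x y (pseq n d x y (t - 1)) k)"
    using Q_argmin Sa_pos assms by blast
  finally show ?thesis .
qed

lemma lin_aux: fixes S :: real assumes "S > 0"
  shows "Dd = b - c \<Longrightarrow> Tt = a + al * c \<Longrightarrow> w = (a + al * b) / S \<Longrightarrow> w - Tt / S = al / S * Dd"
proof -
  assume h1: "Dd = b - c" and h2: "Tt = a + al * c" and h3: "w = (a + al * b) / S"
  show ?thesis unfolding h1 h2 h3 using assms by (simp add: field_simps algebra_simps)
qed

lemma coef: fixes r :: real assumes "r > 0"
  shows "(r * (r + 1) / 2) / 2 * (r / (r * (r + 1) / 2))\<^sup>2 = r / (r + 1)"
proof -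
  have r1: "r + 1 \<noteq> 0" "r \<noteq> 0" using assms by auto
  have e: "r / (r * (r + 1) / 2) = 2 / (r + 1)"
    using r1 by (simp add: divide_simps)
  have "(r * (r + 1) / 2) / 2 * (2 / (r + 1))\<^sup>2 = r / (r + 1)"
    using r1 by (simp add: power2_eq_square divide_simps)
  then show ?thesis by (simp only: e)
qed

lemma round_bound:
  assumes t: "t \<ge> 1" and y: "\<forall>i<n. y i \<in> {-1, 1}" and xb: "\<forall>i<n. sqrt (\<Sum>k<d. (x i k)\<^sup>2) \<le> 1"
  shows "Fw n d x y t (wseq n d x y t) - mm n d x y t \<le> (\<Sum>i<n. \<bar>pseq n d x y t i - pseq n d x y (t - 1) i\<bar>)\<^sup>2"
proof -
  obtain t' where tt: "t = Suc t'" using t by (cases t) auto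
  define S where "S = Sa t"
  have S: "S > 0" using Sa_pos t by (simp add: S_def)
  define D where "D = (\<lambda>k. \<Sum>i<n. (pseq n d x y (t - 1) i - pseq n d x y t i) * y i * x i k)"
  have wk: "wseq n d x y t k - Th n d x y t k / S = alpha t / S * D k" if "k < d" for k
  proof -
    have "D k = th n x y (pseq n d x y (t - 1)) k - th n x y (pseq n d x y t) k"
      by (simp add: D_def th_def sum_subtractf left_diff_distrib)
    moreover have "Th n d x y t k = Th n d x y (t - 1) k + alpha t * th n x y (pseq n d x y t) k"
      by (simp add: tt Th_Suc)
    moreover have "wseq n d x y t k = (Th n d x y (t - 1) k + alpha t * th n x y (pseq n d x y (t - 1)) k) / S"
      using that by (simp add: wseq_closed[OF t] cen_def S_def)
    ultimately show ?thesis using lin_aux[OF S] by blast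
  qed
  have "Fw n d x y t (wseq n d x y t) - mm n d x y t = S / 2 * (\<Sum>k<d. (wseq n d x y t k - Th n d x y t k / S)\<^sup>2)"
    using Q_diff[OF S, of d "Th n d x y t" "wseq n d x y t"] t by (simp add: Fw_Q mm_def S_def)
  also have "\<dots> = S / 2 * (\<Sum>k<d. (alpha t / S)\<^sup>2 * (D k)\<^sup>2)"
    by (intro arg_cong2[where f="(*)"] refl sum.cong) (auto simp: wk power_mult_distrib power_divide)
  also have "\<dots> = (S / 2 * (alpha t / S)\<^sup>2) * (\<Sum>k<d. (D k)\<^sup>2)"
    by (simp add: sum_distrib_left mult_ac)
  also have "\<dots> \<le> 1 * (\<Sum>k<d. (D k)\<^sup>2)"
  proof (rule mult_right_mono)
    have "S / 2 * (alpha t / S)\<^sup>2 = real t / (real t + 1)"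
      unfolding S_def Sa_formula alpha_def by (rule coef) (use t in simp)
    also have "\<dots> \<le> 1" by simp
    finally show "S / 2 * (alpha t / S)\<^sup>2 \<le> 1" .
  qed (simp add: sum_nonneg)
  also have "\<dots> \<le> (\<Sum>i<n. \<bar>pseq n d x y (t - 1) i - pseq n d x y t i\<bar>)\<^sup>2"
    unfolding D_def using thdiff_bound[OF y xb] by simp
  also have "\<dots> = (\<Sum>i<n. \<bar>pseq n d x y t i - pseq n d x y (t - 1) i\<bar>)\<^sup>2"
    by (simp add: abs_minus_commute)
  finally show ?thesis .
qed

lemma regw_ind:
  assumes y: "\<forall>i<n. y i \<in> {-1, 1}" and xb: "\<forall>i<n. sqrt (\<Sum>k<d. (x i k)\<^sup>2) \<le> 1"
  shows "(\<Sum>t\<in>{1..T}. alpha t * (- gfun n d x y (wseq n d x y t) (pseq n d x y t))) - mm n d x y T \<le> path_len n d x y T"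
proof (induction T)
  case 0 then show ?case by (simp add: mm_def path_len_def)
next
  case (Suc T)
  have "alpha (Suc T) * (- gfun n d x y (wseq n d x y (Suc T)) (pseq n d x y (Suc T))) + mm n d x y T - mm n d x y (Suc T)
      \<le> Fw n d x y (Suc T) (wseq n d x y (Suc T)) - mm n d x y (Suc T)"
    using Fw_ge[of n d x y T "wseq n d x y (Suc T)"] by (simp add: Fw_Suc)
  also have "\<dots> \<le> (\<Sum>i<n. \<bar>pseq n d x y (Suc T) i - pseq n d x y (Suc T - 1) i\<bar>)\<^sup>2"
    by (rule round_bound[OF _ y xb]) simp
  finally show ?case using Suc.IH by (simp add: path_len_def)
qed

lemma regret_w_bound:
  assumes y: "\<forall>i<n. y i \<in> {-1, 1}" and xb: "\<forall>i<n. sqrt (\<Sum>k<d. (x i k)\<^sup>2) \<le> 1"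
  shows "regret_w n d x y T \<le> path_len n d x y T"
proof -
  have ne: "Rd d \<noteq> {}" by (auto simp: Rd_def)
  have r: "regret_w n d x y T = (\<Sum>t\<in>{1..T}. alpha t * (- gfun n d x y (wseq n d x y t) (pseq n d x y t))) - (INF w\<in>Rd d. Fw n d x y T w)"
    by (simp add: regret_w_def Fw_def)
  have "mm n d x y T \<le> (INF w\<in>Rd d. Fw n d x y T w)"
    by (rule cINF_greatest[OF ne]) (rule Fw_ge)
  then show ?thesis using regw_ind[OF y xb, of T] r by linarith
qed



definition Op :: "nat \<Rightarrow> nat \<Rightarrow> (nat \<Rightarrow> nat \<Rightarrow> real) \<Rightarrow> (nat \<Rightarrow> real) \<Rightarrow> nat \<Rightarrow> (nat \<Rightarrow> real) \<Rightarrow> real" where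
  "Op n d x y t p = 1/4 * (\<Sum>s\<in>{1..t}. alpha s * gfun n d x y (wseq n d x y s) p) + KL n p (unif n)"

definition Lp :: "nat \<Rightarrow> nat \<Rightarrow> (nat \<Rightarrow> nat \<Rightarrow> real) \<Rightarrow> (nat \<Rightarrow> real) \<Rightarrow> nat \<Rightarrow> nat \<Rightarrow> real" where
  "Lp n d x y t i = 1/4 * (\<Sum>s\<in>{1..t}. alpha s * Amul d x y (wseq n d x y s) i)"

definition cst :: "nat \<Rightarrow> nat \<Rightarrow> (nat \<Rightarrow> nat \<Rightarrow> real) \<Rightarrow> (nat \<Rightarrow> real) \<Rightarrow> nat \<Rightarrow> real" where
  "cst n d x y t = 1/4 * (\<Sum>s\<in>{1..t}. alpha s * (1/2 * (\<Sum>k<d. (wseq n d x y s k)\<^sup>2)))"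

lemma Op_lin: "Op n d x y t p = (\<Sum>i<n. p i * Lp n d x y t i) - cst n d x y t + KL n p (unif n)"
proof -
  have e1: "(\<Sum>s\<in>{1..t}. alpha s * gfun n d x y (wseq n d x y s) p)
      = (\<Sum>s\<in>{1..t}. alpha s * (\<Sum>i<n. p i * Amul d x y (wseq n d x y s) i))
        - (\<Sum>s\<in>{1..t}. alpha s * (1/2 * (\<Sum>k<d. (wseq n d x y s k)\<^sup>2)))"
    by (simp add: gfun_def right_diff_distrib sum_subtractf)
  have e2: "(\<Sum>s\<in>{1..t}. alpha s * (\<Sum>i<n. p i * Amul d x y (wseq n d x y s) i))
      = (\<Sum>i<n. p i * (\<Sum>s\<in>{1..t}. alpha s * Amul d x y (wseq n d x y s) i))"
    unfolding sum_distrib_left by (subst sum.swap) (simp add: mult_ac)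
  have e3: "(\<Sum>i<n. p i * Lp n d x y t i) = 1/4 * (\<Sum>i<n. p i * (\<Sum>s\<in>{1..t}. alpha s * Amul d x y (wseq n d x y s) i))"
    by (simp add: Lp_def sum_distrib_left mult_ac)
  show ?thesis unfolding Op_def e1 e2 e3 cst_def by (simp add: algebra_simps)
qed

lemma Op_gibbs: assumes n: "n \<ge> 1" and p: "p \<in> simplex n"
  shows "Op n d x y t p = KL n p (gibbs n (Lp n d x y t)) - ln (\<Sum>j<n. exp (- Lp n d x y t j)) + ln (real n) - cst n d x y t"
  using gibbs_eq[OF n p, of "Lp n d x y t"] by (simp add: Op_lin)

lemma pseq_gibbs: assumes n: "n \<ge> 1" shows "pseq n d x y t = gibbs n (Lp n d x y t)"
proof (cases "t = 0")
  case True
  have L0: "Lp n d x y 0 = (\<lambda>i. 0)" by (simp add: Lp_def fun_eq_iff)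
  show ?thesis unfolding True pseq0 L0 by (simp add: gibbs_def unif_def fun_eq_iff)
next
  case False
  then have t: "t \<ge> 1" by simp
  define g where "g = gibbs n (Lp n d x y t)"
  have gS: "g \<in> simplex n" using gibbs_simplex[OF n] by (simp add: g_def)
  have gP: "\<forall>i<n. g i > 0" using gibbs_pos[OF n] by (simp add: g_def)
  have eq: "Op n d x y t p = KL n p g + Op n d x y t g" if "p \<in> simplex n" for p
    using Op_gibbs[OF n that] Op_gibbs[OF n gS] by (simp add: g_def KL_self)
  have "pseq n d x y t = p_step n d x y (wseq n d x y) t" using pseq_step t by blast
  also have "\<dots> = arg_min (Op n d x y t) (\<lambda>p. p \<in> simplex n)"
    unfolding p_step_def Op_def ..
  also have "\<dots> = g"
  proof (rule arg_min_unique)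
    show "is_arg_min (Op n d x y t) (\<lambda>p. p \<in> simplex n) g"
    proof -
      have "Op n d x y t g \<le> Op n d x y t z" if "z \<in> simplex n" for z
        using eq[OF that] KL_nonneg[OF that gS gP] by linarith
      then show ?thesis unfolding is_arg_min_def using gS by (auto simp: not_less)
    qed
  next
    fix z assume z: "is_arg_min (Op n d x y t) (\<lambda>p. p \<in> simplex n) z"
    then have zS: "z \<in> simplex n" and "\<not> (g \<in> simplex n \<and> Op n d x y t g < Op n d x y t z)"
      unfolding is_arg_min_def by blast+
    then have "Op n d x y t z \<le> Op n d x y t g" using gS by auto
    then have "KL n z g \<le> 0" using eq[OF zS] by simp
    then show "z = g" using KL_zero_eq zS gS gP by blast
  qed
  finally show ?thesis by (simp add: g_def)
qed

lemma pseq_simplex: "n \<ge> 1 \<Longrightarrow> pseq n d x y t \<in> simplex n"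
  using pseq_gibbs gibbs_simplex by metis

lemma pseq_pos: "n \<ge> 1 \<Longrightarrow> \<forall>i<n. pseq n d x y t i > 0"
  using pseq_gibbs gibbs_pos by metis

lemma Op_eq: assumes n: "n \<ge> 1" and p: "p \<in> simplex n"
  shows "Op n d x y t p = KL n p (pseq n d x y t) + Op n d x y t (pseq n d x y t)"
  using Op_gibbs[OF n p] Op_gibbs[OF n pseq_simplex[OF n]] by (simp add: pseq_gibbs[OF n] KL_self)

lemma Op_Suc: "Op n d x y (Suc t) p = Op n d x y t p + 1/4 * (alpha (Suc t) * gfun n d x y (wseq n d x y (Suc t)) p)"
  by (simp add: Op_def algebra_simps)

lemma sum_p: assumes n: "n \<ge> 1"
  shows "(\<Sum>t\<in>{1..T}. alpha t * gfun n d x y (wseq n d x y t) (pseq n d x y t))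
     = 4 * Op n d x y T (pseq n d x y T) - 4 * (\<Sum>t\<in>{1..T}. KL n (pseq n d x y t) (pseq n d x y (t - 1)))"
proof (induction T)
  case 0 then show ?case by (simp add: Op_def pseq0 KL_self)
next
  case (Suc T)
  have "alpha (Suc T) * gfun n d x y (wseq n d x y (Suc T)) (pseq n d x y (Suc T))
    = 4 * Op n d x y (Suc T) (pseq n d x y (Suc T)) - 4 * Op n d x y T (pseq n d x y (Suc T))"
    by (simp add: Op_Suc)
  also have "Op n d x y T (pseq n d x y (Suc T)) = KL n (pseq n d x y (Suc T)) (pseq n d x y T) + Op n d x y T (pseq n d x y T)"
    by (rule Op_eq[OF n pseq_simplex[OF n]])
  finally have e: "alpha (Suc T) * gfun n d x y (wseq n d x y (Suc T)) (pseq n d x y (Suc T))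
    = 4 * Op n d x y (Suc T) (pseq n d x y (Suc T)) - 4 * (KL n (pseq n d x y (Suc T)) (pseq n d x y T) + Op n d x y T (pseq n d x y T))" .
  have s1: "(\<Sum>t\<in>{1..Suc T}. alpha t * gfun n d x y (wseq n d x y t) (pseq n d x y t))
    = (\<Sum>t\<in>{1..T}. alpha t * gfun n d x y (wseq n d x y t) (pseq n d x y t)) + alpha (Suc T) * gfun n d x y (wseq n d x y (Suc T)) (pseq n d x y (Suc T))"
    by (rule sum.cl_ivl_Suc[THEN trans]) simp
  have s2: "(\<Sum>t\<in>{1..Suc T}. KL n (pseq n d x y t) (pseq n d x y (t - 1)))
    = (\<Sum>t\<in>{1..T}. KL n (pseq n d x y t) (pseq n d x y (t - 1))) + KL n (pseq n d x y (Suc T)) (pseq n d x y T)"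
    by (rule sum.cl_ivl_Suc[THEN trans]) simp
  show ?case unfolding s1 s2 Suc.IH e by (simp add: algebra_simps)
qed

lemma Gp_lower: assumes n: "n \<ge> 1" and p: "p \<in> simplex n"
  shows "(\<Sum>t\<in>{1..T}. alpha t * gfun n d x y (wseq n d x y t) p) \<ge> 4 * Op n d x y T (pseq n d x y T) - 4 * ln (real n)"
proof -
  have "(\<Sum>t\<in>{1..T}. alpha t * gfun n d x y (wseq n d x y t) p) = 4 * Op n d x y T p - 4 * KL n p (unif n)"
    by (simp add: Op_def)
  also have "\<dots> = 4 * KL n p (pseq n d x y T) + 4 * Op n d x y T (pseq n d x y T) - 4 * KL n p (unif n)"
    using Op_eq[OF n p] by simp
  finally show ?thesis
    using KL_nonneg[OF p pseq_simplex[OF n, of d x y T] pseq_pos[OF n, of d x y T]] KL_unif_le[OF n p] by linarith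
qed

lemma regret_p_bound: assumes n: "n \<ge> 1"
  shows "regret_p n d x y T \<le> 4 * ln (real n) - 2 * path_len n d x y T"
proof -
  have ne: "simplex n \<noteq> {}" using pseq_simplex[OF n] by blast
  have inf: "4 * Op n d x y T (pseq n d x y T) - 4 * ln (real n)
     \<le> (INF p\<in>simplex n. \<Sum>t\<in>{1..T}. alpha t * gfun n d x y (wseq n d x y t) p)"
    by (rule cINF_greatest[OF ne]) (rule Gp_lower[OF n])
  have kl: "(\<Sum>t\<in>{1..T}. KL n (pseq n d x y t) (pseq n d x y (t - 1)))
      \<ge> (\<Sum>t\<in>{1..T}. 1/2 * (\<Sum>i<n. \<bar>pseq n d x y t i - pseq n d x y (t - 1) i\<bar>)\<^sup>2)"
    by (intro sum_mono pinsker pseq_simplex pseq_pos n)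
  have "(\<Sum>t\<in>{1..T}. 1/2 * (\<Sum>i<n. \<bar>pseq n d x y t i - pseq n d x y (t - 1) i\<bar>)\<^sup>2) = 1/2 * path_len n d x y T"
    by (simp add: path_len_def sum_distrib_left)
  then show ?thesis using inf kl sum_p[OF n, of d x y T] unfolding regret_p_def by linarith
qed



lemma g_star:
  fixes wstar :: "nat \<Rightarrow> real"
  assumes p: "p \<in> simplex n" and ws: "sqrt (\<Sum>k<d. (wstar k)\<^sup>2) = 1"
    and gm: "\<forall>i<n. y i * (\<Sum>k<d. x i k * wstar k) \<ge> \<gamma>" and g0: "\<gamma> > 0"
  shows "gfun n d x y (\<lambda>k. if k < d then \<gamma> * wstar k else 0) p \<ge> \<gamma>\<^sup>2 / 2"
proof -
  define w' where "w' = (\<lambda>k. if k < d then \<gamma> * wstar k else 0)"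
  have ps: "(\<Sum>i<n. p i) = 1" and pn: "\<And>i. i<n \<Longrightarrow> p i \<ge> 0" using p by (auto simp: simplex_def)
  have s2: "(\<Sum>k<d. (wstar k)\<^sup>2) = 1" using ws by (metis real_sqrt_eq_1_iff)
  have n2: "(\<Sum>k<d. (w' k)\<^sup>2) = \<gamma>\<^sup>2"
  proof -
    have "(\<Sum>k<d. (w' k)\<^sup>2) = (\<Sum>k<d. \<gamma>\<^sup>2 * (wstar k)\<^sup>2)"
      by (intro sum.cong) (auto simp: w'_def power_mult_distrib)
    then show ?thesis by (simp add: sum_distrib_left[symmetric] s2)
  qed
  have am: "Amul d x y w' i = \<gamma> * (y i * (\<Sum>k<d. x i k * wstar k))" for i
  proof -
    have "(\<Sum>k<d. x i k * w' k) = (\<Sum>k<d. \<gamma> * (x i k * wstar k))"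
      by (intro sum.cong) (auto simp: w'_def)
    then show ?thesis by (simp add: Amul_def sum_distrib_left[symmetric] mult_ac)
  qed
  have "(\<Sum>i<n. p i * Amul d x y w' i) \<ge> (\<Sum>i<n. p i * (\<gamma> * \<gamma>))"
  proof (rule sum_mono)
    fix i assume i: "i \<in> {..<n}"
    have "\<gamma> * \<gamma> \<le> \<gamma> * (y i * (\<Sum>k<d. x i k * wstar k))"
      using gm i g0 by (intro mult_left_mono) auto
    then show "p i * (\<gamma> * \<gamma>) \<le> p i * Amul d x y w' i"
      using pn i by (simp add: am mult_left_mono)
  qed
  also have "(\<Sum>i<n. p i * (\<gamma> * \<gamma>)) = \<gamma>\<^sup>2"
    by (simp add: sum_distrib_right[symmetric] ps power2_eq_square)
  finally have "(\<Sum>i<n. p i * Amul d x y w' i) \<ge> \<gamma>\<^sup>2" .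
  then show ?thesis unfolding w'_def[symmetric] by (simp add: gfun_def n2)
qed

lemma alpha_nonneg: "alpha t \<ge> 0" by (simp add: alpha_def)

lemma Gp_vertex:
  assumes i: "i < n" and T: "T \<ge> 1"
  shows "(\<Sum>t\<in>{1..T}. alpha t * gfun n d x y (wseq n d x y t) (\<lambda>j. if j = i then 1 else 0))
     \<le> Sa T * (y i * (\<Sum>k<d. x i k * wbar n d x y T k))"
proof -
  have ge: "gfun n d x y w (\<lambda>j. if j = i then 1 else 0) = Amul d x y w i - 1/2 * (\<Sum>k<d. (w k)\<^sup>2)" for w
  proof -
    have "(\<Sum>j<n. (if j = i then 1 else 0) * Amul d x y w j) = (\<Sum>j<n. if j = i then Amul d x y w j else 0)"
      by (intro sum.cong) auto
    also have "\<dots> = Amul d x y w i" using i by (simp add: sum.delta)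
    finally show ?thesis by (simp add: gfun_def)
  qed
  have "(\<Sum>t\<in>{1..T}. alpha t * gfun n d x y (wseq n d x y t) (\<lambda>j. if j = i then 1 else 0))
      \<le> (\<Sum>t\<in>{1..T}. alpha t * Amul d x y (wseq n d x y t) i)"
    unfolding ge by (intro sum_mono mult_left_mono) (auto simp: alpha_nonneg sum_nonneg)
  also have "\<dots> = y i * (\<Sum>k<d. x i k * (\<Sum>t\<in>{1..T}. alpha t * wseq n d x y t k))"
    unfolding Amul_def sum_distrib_left by (subst sum.swap) (simp add: mult_ac)
  also have "\<dots> = Sa T * (y i * (\<Sum>k<d. x i k * wbar n d x y T k))"
  proof -
    have wk: "(\<Sum>t\<in>{1..T}. alpha t * wseq n d x y t k) = Sa T * wbar n d x y T k" for k
      using Sa_pos[OF T] by (simp add: wbar_def Sa_def)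
    show ?thesis by (simp only: wk) (simp add: sum_distrib_left mult_ac)
  qed
  finally show ?thesis .
qed


lemma margin_part:
  assumes n: "n \<ge> 1" and y: "\<forall>i<n. y i \<in> {-1, 1}" and xb: "\<forall>i<n. sqrt (\<Sum>k<d. (x i k)\<^sup>2) \<le> 1"
    and ws: "sqrt (\<Sum>k<d. (wstar k)\<^sup>2) = 1"
    and gdef: "\<gamma> = Min ((\<lambda>i. y i * (\<Sum>k<d. x i k * wstar k)) ` {..<n})"
    and gpos: "\<gamma> > 0"
    and Tc: "real T \<ge> 4 * sqrt (ln (real n)) / \<gamma>"
    and i: "i < n"
  shows "y i * (\<Sum>k<d. x i k * wbar n d x y T k) \<ge> 0"
proof (cases "T = 0")
  case True
  then show ?thesis by (simp add: wbar_def)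
next
  case False
  then have T: "T \<ge> 1" by simp
  have SaT: "Sa T > 0" using Sa_pos[OF T] .
  have gm: "\<forall>i<n. y i * (\<Sum>k<d. x i k * wstar k) \<ge> \<gamma>"
    unfolding gdef by (auto intro: Min_le)
  define w' where "w' = (\<lambda>k. if k < d then \<gamma> * wstar k else 0)"
  have w'R: "w' \<in> Rd d" by (simp add: w'_def Rd_def)
  define M where "M = y i * (\<Sum>k<d. x i k * wbar n d x y T k)"
  define e where "e = (\<lambda>j. if j = i then (1::real) else 0)"
  have eS: "e \<in> simplex n" using i by (simp add: e_def simplex_def sum.delta)
  have bw: "bdd_below (Fw n d x y T ` Rd d)" by (rule bdd_belowI2) (rule Fw_ge)
  have A: "(INF w\<in>Rd d. Fw n d x y T w) \<le> - (Sa T * (\<gamma>\<^sup>2 / 2))"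
  proof -
    have "(INF w\<in>Rd d. Fw n d x y T w) \<le> Fw n d x y T w'" by (rule cINF_lower[OF bw w'R])
    also have "\<dots> \<le> (\<Sum>t\<in>{1..T}. alpha t * (- (\<gamma>\<^sup>2 / 2)))"
      unfolding Fw_def
    proof (rule sum_mono)
      fix t assume "t \<in> {1..T}"
      have "gfun n d x y w' (pseq n d x y t) \<ge> \<gamma>\<^sup>2 / 2"
        unfolding w'_def by (rule g_star[OF pseq_simplex[OF n] ws gm gpos])
      then show "alpha t * - gfun n d x y w' (pseq n d x y t) \<le> alpha t * - (\<gamma>\<^sup>2 / 2)"
        by (intro mult_left_mono) (auto simp: alpha_nonneg)
    qed
    also have "\<dots> = (\<Sum>t\<in>{1..T}. alpha t) * (- (\<gamma>\<^sup>2 / 2))" by (rule sum_distrib_right[symmetric])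
    also have "\<dots> = - (Sa T * (\<gamma>\<^sup>2 / 2))" by (simp add: Sa_def)
    finally show ?thesis .
  qed
  have bp: "bdd_below ((\<lambda>p. \<Sum>t\<in>{1..T}. alpha t * gfun n d x y (wseq n d x y t) p) ` simplex n)"
    by (rule bdd_belowI2) (rule Gp_lower[OF n])
  have B: "(INF p\<in>simplex n. \<Sum>t\<in>{1..T}. alpha t * gfun n d x y (wseq n d x y t) p) \<le> Sa T * M"
  proof -
    have "(INF p\<in>simplex n. \<Sum>t\<in>{1..T}. alpha t * gfun n d x y (wseq n d x y t) p)
        \<le> (\<Sum>t\<in>{1..T}. alpha t * gfun n d x y (wseq n d x y t) e)" by (rule cINF_lower[OF bp eS])
    also have "\<dots> \<le> Sa T * M" unfolding e_def M_def by (rule Gp_vertex[OF i T])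
    finally show ?thesis .
  qed
  have rsum: "regret_w n d x y T + regret_p n d x y T
     = - (INF w\<in>Rd d. Fw n d x y T w) - (INF p\<in>simplex n. \<Sum>t\<in>{1..T}. alpha t * gfun n d x y (wseq n d x y t) p)"
    by (simp add: regret_w_def regret_p_def Fw_def sum_negf)
  have pl: "path_len n d x y T \<ge> 0" by (simp add: path_len_def sum_nonneg)
  have r4: "regret_w n d x y T + regret_p n d x y T \<le> 4 * ln (real n)"
    using regret_w_bound[OF y xb, of T] regret_p_bound[OF n, of d x y T] pl by linarith
  have key: "Sa T * (\<gamma>\<^sup>2 / 2) - Sa T * M \<le> 4 * ln (real n)" using A B rsum r4 by linarith
  have lnn: "ln (real n) \<ge> 0" using n by simp
  have Tg: "4 * sqrt (ln (real n)) \<le> real T * \<gamma>" using Tc gpos by (simp add: divide_le_eq)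
  have "(4 * sqrt (ln (real n)))\<^sup>2 \<le> (real T * \<gamma>)\<^sup>2" by (rule power_mono[OF Tg]) (simp add: lnn)
  then have T2: "16 * ln (real n) \<le> (real T * \<gamma>)\<^sup>2" using lnn by (simp add: power_mult_distrib)
  have "Sa T * (\<gamma>\<^sup>2 / 2) = (real T * \<gamma>)\<^sup>2 / 4 + real T * \<gamma>\<^sup>2 / 4"
    by (simp add: Sa_formula power2_eq_square field_simps)
  moreover have "real T * \<gamma>\<^sup>2 / 4 \<ge> 0" by simp
  ultimately have "Sa T * (\<gamma>\<^sup>2 / 2) \<ge> 4 * ln (real n)" using T2 by linarith
  then have "Sa T * M \<ge> 0" using key by linarith
  then show ?thesis using SaT by (simp add: M_def zero_le_mult_iff)
qed

theorem theorem3: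
  shows "\<exists>C::real. C > 0 \<and>
    (\<forall>(n::nat) (d::nat) (x::nat \<Rightarrow> nat \<Rightarrow> real) (y::nat \<Rightarrow> real) (wstar::nat \<Rightarrow> real) (\<gamma>::real) (T::nat).
       n \<ge> 1
       \<and> (\<forall>i<n. y i \<in> {-1, 1})
       \<and> (\<forall>i<n. sqrt (\<Sum>k<d. (x i k)^2) \<le> 1)
       \<and> sqrt (\<Sum>k<d. (wstar k)^2) = 1
       \<and> \<gamma> = Min ((\<lambda>i. y i * (\<Sum>k<d. x i k * wstar k)) ` {..<n})
       \<and> \<gamma> > 0
     \<longrightarrow>
       regret_w n d x y T \<le> 2 * path_len n d x y T
       \<and> regret_p n d x y T \<le> 4 * ln (real n) - 2 * path_len n d x y T
       \<and> (real T \<ge> C * sqrt (ln (real n)) / \<gamma> \<longrightarrow>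
            (\<forall>i<n. y i * (\<Sum>k<d. x i k * wbar n d x y T k) \<ge> 0)))"
proof (rule exI[of _ 4], intro conjI allI impI)
  show "(4::real) > 0" by simp
next
  fix n d :: nat and x :: "nat \<Rightarrow> nat \<Rightarrow> real" and y wstar :: "nat \<Rightarrow> real" and \<gamma> :: real and T :: nat
  assume H: "n \<ge> 1
       \<and> (\<forall>i<n. y i \<in> {-1, 1})
       \<and> (\<forall>i<n. sqrt (\<Sum>k<d. (x i k)^2) \<le> 1)
       \<and> sqrt (\<Sum>k<d. (wstar k)^2) = 1
       \<and> \<gamma> = Min ((\<lambda>i. y i * (\<Sum>k<d. x i k * wstar k)) ` {..<n})
       \<and> \<gamma> > 0"
  then have n: "n \<ge> 1" and y: "\<forall>i<n. y i \<in> {-1, 1}" and xb: "\<forall>i<n. sqrt (\<Sum>k<d. (x i k)\<^sup>2) \<le> 1"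
    and ws: "sqrt (\<Sum>k<d. (wstar k)\<^sup>2) = 1"
    and gdef: "\<gamma> = Min ((\<lambda>i. y i * (\<Sum>k<d. x i k * wstar k)) ` {..<n})"
    and gpos: "\<gamma> > 0" by auto
  have pl: "path_len n d x y T \<ge> 0" by (simp add: path_len_def sum_nonneg)
  show "regret_w n d x y T \<le> 2 * path_len n d x y T"
    using regret_w_bound[OF y xb, of T] pl by linarith
  show "regret_p n d x y T \<le> 4 * ln (real n) - 2 * path_len n d x y T"
    by (rule regret_p_bound[OF n])
  fix i assume Tc: "4 * sqrt (ln (real n)) / \<gamma> \<le> real T" and i: "i < n"
  show "y i * (\<Sum>k<d. x i k * wbar n d x y T k) \<ge> 0"
    by (rule margin_part[OF n y xb ws gdef gpos Tc i])
qed


end
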